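(* Let $r\in\mathbb{N}$ and let $\bm{{\mathcal H}_x},\bm{{\mathcal H}_y}$ be finite sets of vectors of $(r+1)$-vertex graphs (each graph endowed with an ordered pair of distinguished vertices), with $t_x:=|\bm{{\mathcal H}_x}|$ and $t_y:=|\bm{{\mathcal H}_y}|$. Let $\beta_x,\beta_y,\epsilon>0$. Suppose $G$ is a sufficiently large $n$-vertex graph, $x,y\in V(G)$, and there is $U\subseteq V(G)$ with $|U|\geq\epsilon n$ such that for every $z\in U$, $x$ and $z$ are $(\bm{{\mathcal H}_x};\beta_x)$-reachable and $z$ and $y$ are $(\bm{{\mathcal H}_y};\beta_y)$-reachable. Then $x$ and $y$ are $(\bm{{\mathcal H}_x}+\bm{{\mathcal H}_y};\beta)$-reachable, where $\beta:=\frac{\epsilon\beta_x\beta_y}{2t_xt_y}$.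
   Context: Let $\bm{H}=(H^1,\dots,H^t)$ be a vector of $(r+1)$-vertex graphs, each $H^i$ with an ordered pair of distinct distinguished vertices $(w_1^i,w_2^i)$. An $\bm{H}$-path is obtained by taking vertex-disjoint copies of $H^1,\dots,H^t$ and identifying $w_2^i$ with $w_1^{i+1}$ for $i\in[t-1]$; its endpoints are $w_1^1$ and $w_2^t$. Two vertices $x,y$ of an $n$-vertex graph $G$ are $(\bm{H};\beta)$-reachable if there are at least $\beta n^{tr-1}$ distinct labelled embeddings of the $\bm{H}$-path into $G$ mapping the endpoints to $\{x,y\}$. For a set $\bm{{\mathcal H}}$ of such vectors, $x,y$ are $(\bm{{\mathcal H}};\beta)$-reachable if they are $(\bm{H};\beta)$-reachable for some $\bm{H}\in\bm{{\mathcal H}}$. For two such sets, $\bm{{\mathcal H}}+\tilde{\bm{{\mathcal H}}}:=\bm{{\mathcal H}}\cup\tilde{\bm{{\mathcal H}}}\cup\{(H^1,\dots,H^t,\tilde H^1,\dots,\tilde H^{\tilde t}):(H^1,\dots,H^t)\in\bm{{\mathcal H}},(\tilde H^1,\dots,\tilde H^{\tilde t})\in\tilde{\bm{{\mathcal H}}}\}$. *)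

theory Defs
  imports Main "HOL.Real"
begin

text \<open>A rooted small graph: edge relation on the vertex set {0..r}, together with
  an ordered pair of distinguished vertices (w1, w2).\<close>
type_synonym rgraph = "(nat \<Rightarrow> nat \<Rightarrow> bool) \<times> nat \<times> nat"

definition hE :: "rgraph \<Rightarrow> nat \<Rightarrow> nat \<Rightarrow> bool" where "hE H = fst H"
definition hw1 :: "rgraph \<Rightarrow> nat" where "hw1 H = fst (snd H)"
definition hw2 :: "rgraph \<Rightarrow> nat" where "hw2 H = snd (snd H)"

definition rooted_graph :: "nat \<Rightarrow> rgraph \<Rightarrow> bool" where
  "rooted_graph r H \<longleftrightarrow>
     (\<forall>u v. hE H u v \<longrightarrow> u \<le> r \<and> v \<le> r \<and> u \<noteq> v \<and> hE H v u) \<and>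
     hw1 H \<le> r \<and> hw2 H \<le> r \<and> hw1 H \<noteq> hw2 H"

definition sgraph :: "nat set \<Rightarrow> (nat \<Rightarrow> nat \<Rightarrow> bool) \<Rightarrow> bool" where
  "sgraph V E \<longleftrightarrow> finite V \<and> (\<forall>u v. E u v \<longrightarrow> u \<in> V \<and> v \<in> V \<and> u \<noteq> v \<and> E v u)"

text \<open>Labelled embeddings of the Hs-path into G sending the first endpoint w1 of the
  first copy to x and the last endpoint w2 of the last copy to y.  An embedding is
  represented by the family of maps (f i) on the vertex set {0..r} of the i-th copy
  (normalised to 0 outside the domain); consecutive copies agree on the identified
  vertices, each copy is mapped homomorphically into G, and the induced map on the
  vertex set of the path (copies modulo the identifications) is injective.\<close>
definition path_embeddings ::
  "nat \<Rightarrow> rgraph list \<Rightarrow> nat set \<Rightarrow> (nat \<Rightarrow> nat \<Rightarrow> bool) \<Rightarrow> nat \<Rightarrow> nat \<Rightarrow> (nat \<Rightarrow> nat \<Rightarrow> nat) set" where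
  "path_embeddings r Hs V E x y = {f.
     (\<forall>i v. (length Hs \<le> i \<or> r < v) \<longrightarrow> f i v = 0) \<and>
     (\<forall>i<length Hs. \<forall>v\<le>r. f i v \<in> V) \<and>
     (\<forall>i<length Hs. \<forall>u\<le>r. \<forall>v\<le>r. hE (Hs!i) u v \<longrightarrow> E (f i u) (f i v)) \<and>
     (\<forall>i. Suc i < length Hs \<longrightarrow> f i (hw2 (Hs!i)) = f (Suc i) (hw1 (Hs!Suc i))) \<and>
     (\<forall>i<length Hs. \<forall>j<length Hs. \<forall>u\<le>r. \<forall>v\<le>r. f i u = f j v \<longrightarrow>
         (i = j \<and> u = v) \<or>
         (j = Suc i \<and> u = hw2 (Hs!i) \<and> v = hw1 (Hs!j)) \<or>
         (i = Suc j \<and> v = hw2 (Hs!j) \<and> u = hw1 (Hs!i))) \<and>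
     f 0 (hw1 (Hs!0)) = x \<and>
     f (length Hs - 1) (hw2 (Hs!(length Hs - 1))) = y}"

definition reachable ::
  "nat \<Rightarrow> rgraph list \<Rightarrow> real \<Rightarrow> nat set \<Rightarrow> (nat \<Rightarrow> nat \<Rightarrow> bool) \<Rightarrow> nat \<Rightarrow> nat \<Rightarrow> bool" where
  "reachable r Hs \<beta> V E x y \<longleftrightarrow>
     real (card (path_embeddings r Hs V E x y)) \<ge> \<beta> * real (card V) ^ (length Hs * r - 1)"

definition reachable_set ::
  "nat \<Rightarrow> rgraph list set \<Rightarrow> real \<Rightarrow> nat set \<Rightarrow> (nat \<Rightarrow> nat \<Rightarrow> bool) \<Rightarrow> nat \<Rightarrow> nat \<Rightarrow> bool" where
  "reachable_set r HH \<beta> V E x y \<longleftrightarrow> (\<exists>Hs\<in>HH. reachable r Hs \<beta> V E x y)"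

definition vec_plus :: "rgraph list set \<Rightarrow> rgraph list set \<Rightarrow> rgraph list set" where
  "vec_plus A B = A \<union> B \<union> {a @ b | a b. a \<in> A \<and> b \<in> B}"

end

theory Submission
  imports Defs "HOL-Library.FuncSet"
begin


definition C0 :: "nat \<Rightarrow> rgraph list \<Rightarrow> (nat \<times> nat) set" where
  "C0 r Hs = {(i,u). i < length Hs \<and> u \<le> r \<and> \<not>(0 < i \<and> u = hw1 (Hs!i))}"

definition canon :: "rgraph list \<Rightarrow> nat \<times> nat \<Rightarrow> nat \<times> nat" where
  "canon Hs p = (if 0 < fst p \<and> snd p = hw1 (Hs!fst p) then (fst p - 1, hw2 (Hs!(fst p - 1))) else p)"

definition ev :: "(nat \<Rightarrow> nat \<Rightarrow> nat) \<Rightarrow> nat \<times> nat \<Rightarrow> nat" where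
  "ev g p = g (fst p) (snd p)"

lemma rootedD: "rooted_graph r H \<Longrightarrow> hw1 H \<le> r \<and> hw2 H \<le> r \<and> hw1 H \<noteq> hw2 H"
  by (simp add: rooted_graph_def)

lemma finite_C0: "finite (C0 r Hs)"
proof -
  have "C0 r Hs \<subseteq> {..<length Hs} \<times> {..r}" by (auto simp: C0_def)
  then show ?thesis by (rule finite_subset) auto
qed

lemma card_C0:
  assumes rooted: "\<forall>H\<in>set Hs. rooted_graph r H" and ne: "Hs \<noteq> []"
  shows "card (C0 r Hs) \<le> length Hs * r + 1"
proof -
  let ?t = "length Hs"
  have sub: "C0 r Hs \<subseteq> ({0} \<times> {..r}) \<union> (\<Union>i\<in>{1..<?t}. {i} \<times> ({..r} - {hw1 (Hs!i)}))"
    by (auto simp: C0_def)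
  have "card (C0 r Hs) \<le> card (({0} \<times> {..r}) \<union> (\<Union>i\<in>{1..<?t}. {i} \<times> ({..r} - {hw1 (Hs!i)})))"
    by (rule card_mono[OF _ sub]) auto
  also have "\<dots> \<le> card ({0::nat} \<times> {..r}) + card (\<Union>i\<in>{1..<?t}. {i} \<times> ({..r} - {hw1 (Hs!i)}))"
    by (rule card_Un_le)
  also have "card (\<Union>i\<in>{1..<?t}. {i} \<times> ({..r} - {hw1 (Hs!i)})) \<le> (\<Sum>i\<in>{1..<?t}. card ({i} \<times> ({..r} - {hw1 (Hs!i)})))"
    by (rule card_UN_le) auto
  also have "\<dots> = (\<Sum>i\<in>{1..<?t}. r)"
  proof (rule sum.cong)
    fix i assume "i \<in> {1..<?t}"
    then have "Hs!i \<in> set Hs" by auto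
    then have "hw1 (Hs!i) \<le> r" using rooted rootedD by blast
    then show "card ({i} \<times> ({..r} - {hw1 (Hs!i)})) = r"
      by (simp add: card_cartesian_product)
  qed simp
  also have "card ({0::nat} \<times> {..r}) = r + 1" by (simp add: card_cartesian_product)
  finally have "card (C0 r Hs) \<le> r + 1 + (?t - 1) * r" by simp
  moreover have "r + (?t - 1) * r = ?t * r" using ne
    by (cases ?t) auto
  ultimately show ?thesis by simp
qed

lemma pe_D:
  assumes "g \<in> path_embeddings r Hs V E x y"
  shows "(\<forall>i v. (length Hs \<le> i \<or> r < v) \<longrightarrow> g i v = 0)"
    "(\<forall>i<length Hs. \<forall>v\<le>r. g i v \<in> V)"
    "(\<forall>i<length Hs. \<forall>u\<le>r. \<forall>v\<le>r. hE (Hs!i) u v \<longrightarrow> E (g i u) (g i v))"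
    "(\<forall>i. Suc i < length Hs \<longrightarrow> g i (hw2 (Hs!i)) = g (Suc i) (hw1 (Hs!Suc i)))"
    "(\<forall>i<length Hs. \<forall>j<length Hs. \<forall>u\<le>r. \<forall>v\<le>r. g i u = g j v \<longrightarrow>
         (i = j \<and> u = v) \<or>
         (j = Suc i \<and> u = hw2 (Hs!i) \<and> v = hw1 (Hs!j)) \<or>
         (i = Suc j \<and> v = hw2 (Hs!j) \<and> u = hw1 (Hs!i)))"
    "g 0 (hw1 (Hs!0)) = x"
    "g (length Hs - 1) (hw2 (Hs!(length Hs - 1))) = y"
  using assms unfolding path_embeddings_def by blast+

lemma pe_canon:
  assumes "g \<in> path_embeddings r Hs V E x y" "j < length Hs"
  shows "ev g (canon Hs (j,v)) = g j v"
proof (cases "0 < j \<and> v = hw1 (Hs!j)")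
  case True
  then have "Suc (j-1) < length Hs" using assms by simp
  then have "g (j-1) (hw2 (Hs!(j-1))) = g (Suc (j-1)) (hw1 (Hs!Suc (j-1)))"
    using pe_D(4)[OF assms(1)] by blast
  then show ?thesis using True by (simp add: canon_def ev_def)
qed (auto simp: canon_def ev_def)

lemma canon_in:
  assumes rooted: "\<forall>H\<in>set Hs. rooted_graph r H" and "j < length Hs" "v \<le> r"
  shows "canon Hs (j,v) \<in> C0 r Hs"
proof (cases "0 < j \<and> v = hw1 (Hs!j)")
  case True
  have "Hs!(j-1) \<in> set Hs" using assms by simp
  then have "hw2 (Hs!(j-1)) \<le> r \<and> hw1 (Hs!(j-1)) \<noteq> hw2 (Hs!(j-1))" using rooted rootedD by blast
  then show ?thesis using True assms by (auto simp: canon_def C0_def)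
qed (use assms in \<open>auto simp: canon_def C0_def\<close>)

lemma core:
  assumes rooted: "\<forall>H\<in>set Hs. rooted_graph r H" and fin: "finite V"
    and X: "X \<subseteq> path_embeddings r Hs V E x y" and S: "S \<subseteq> C0 r Hs"
    and agree: "\<forall>g1\<in>X. \<forall>g2\<in>X. \<forall>p\<in>S. ev g1 p = ev g2 p"
  shows "finite X \<and> card X \<le> card V ^ (card (C0 r Hs) - card S)"
proof -
  define D where "D = C0 r Hs - S"
  define \<phi> where "\<phi> g = restrict (ev g) D" for g
  have fD: "finite D" using finite_C0 D_def by auto
  have img: "\<phi> ` X \<subseteq> PiE D (\<lambda>_. V)"
  proof
    fix h assume "h \<in> \<phi> ` X"
    then obtain g where g: "g \<in> X" "h = \<phi> g" by auto
    have "g \<in> path_embeddings r Hs V E x y" using g X by auto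
    then have "ev g p \<in> V" if "p \<in> D" for p
      using pe_D(2) that by (auto simp: D_def C0_def ev_def)
    then show "h \<in> PiE D (\<lambda>_. V)" using g by (auto simp: \<phi>_def)
  qed
  have inj: "inj_on \<phi> X"
  proof
    fix g1 g2 assume g1: "g1 \<in> X" and g2: "g2 \<in> X" and eq: "\<phi> g1 = \<phi> g2"
    have p1: "g1 \<in> path_embeddings r Hs V E x y" and p2: "g2 \<in> path_embeddings r Hs V E x y"
      using g1 g2 X by auto
    have agC: "ev g1 p = ev g2 p" if "p \<in> C0 r Hs" for p
    proof (cases "p \<in> S")
      case True then show ?thesis using agree g1 g2 by blast
    next
      case False
      then have "p \<in> D" using that D_def by auto
      then show ?thesis using fun_cong[OF eq, of p] by (simp add: \<phi>_def)
    qed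
    show "g1 = g2"
    proof (intro ext)
      fix i v
      show "g1 i v = g2 i v"
      proof (cases "i < length Hs \<and> v \<le> r")
        case True
        then have "canon Hs (i,v) \<in> C0 r Hs" using canon_in rooted by blast
        then show ?thesis using agC pe_canon[OF p1, of i v] pe_canon[OF p2, of i v] True by metis
      next
        case False
        then show ?thesis using pe_D(1)[OF p1] pe_D(1)[OF p2] by auto
      qed
    qed
  qed
  have fP: "finite (PiE D (\<lambda>_. V))" using fD fin by (simp add: finite_PiE)
  have "card X \<le> card (PiE D (\<lambda>_. V))"
    using card_inj_on_le[OF inj img fP] .
  also have "\<dots> = card V ^ card D" using fD by (simp add: card_PiE)
  also have "card D = card (C0 r Hs) - card S"
    unfolding D_def using S finite_C0 by (simp add: card_Diff_subset finite_subset)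
  finally have "card X \<le> card V ^ (card (C0 r Hs) - card S)" .
  moreover have "finite X" using finite_imageD[OF finite_subset[OF img fP] inj] .
  ultimately show ?thesis by simp
qed

lemma core_real:
  assumes rooted: "\<forall>H\<in>set Hs. rooted_graph r H" and ne: "Hs \<noteq> []" and fin: "finite V" and Vne: "V \<noteq> {}"
    and X: "X \<subseteq> path_embeddings r Hs V E x y" and S: "S \<subseteq> C0 r Hs" and S1: "card S \<ge> 1"
    and agree: "\<forall>g1\<in>X. \<forall>g2\<in>X. \<forall>p\<in>S. ev g1 p = ev g2 p"
  shows "finite X \<and> real (card X) * real (card V) ^ (card S - 1) \<le> real (card V) ^ (length Hs * r)"
proof -
  note c = core[OF rooted fin X S agree]
  let ?n = "real (card V)"
  have n1: "?n \<ge> 1" using fin Vne by (simp add: Suc_leI card_gt_0_iff)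
  have sc: "card S \<le> card (C0 r Hs)" using S finite_C0 by (simp add: card_mono)
  have "real (card X) * ?n ^ (card S - 1) \<le> ?n ^ (card (C0 r Hs) - card S) * ?n ^ (card S - 1)"
    using c by (intro mult_right_mono) (auto simp flip: of_nat_power)
  also have "\<dots> = ?n ^ (card (C0 r Hs) - 1)"
    using sc S1 by (simp flip: power_add)
  also have "\<dots> \<le> ?n ^ (length Hs * r)"
    using card_C0[OF rooted ne] n1 by (intro power_increasing) auto
  finally show ?thesis using c by simp
qed



definition st :: "rgraph list \<Rightarrow> nat \<times> nat" where "st Hs = (0, hw1 (Hs!0))"
definition en :: "rgraph list \<Rightarrow> nat \<times> nat" where "en Hs = (length Hs - 1, hw2 (Hs!(length Hs - 1)))"

lemma st_in: "Hs \<noteq> [] \<Longrightarrow> \<forall>H\<in>set Hs. rooted_graph r H \<Longrightarrow> st Hs \<in> C0 r Hs"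
  using rootedD[of r "Hs!0"] by (auto simp: st_def C0_def)

lemma en_in: "Hs \<noteq> [] \<Longrightarrow> \<forall>H\<in>set Hs. rooted_graph r H \<Longrightarrow> en Hs \<in> C0 r Hs"
  using rootedD[of r "Hs!(length Hs - 1)"] by (auto simp: en_def C0_def)

lemma st_en: "Hs \<noteq> [] \<Longrightarrow> \<forall>H\<in>set Hs. rooted_graph r H \<Longrightarrow> st Hs \<noteq> en Hs"
  using rootedD[of r "Hs!0"] by (auto simp: st_def en_def)

lemma ev_st: "g \<in> path_embeddings r Hs V E x y \<Longrightarrow> ev g (st Hs) = x"
  using pe_D(6) by (simp add: ev_def st_def)
lemma ev_en: "g \<in> path_embeddings r Hs V E x y \<Longrightarrow> ev g (en Hs) = y"
  using pe_D(7) by (simp add: ev_def en_def)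

lemma bound_all:
  assumes rooted: "\<forall>H\<in>set Hs. rooted_graph r H" and ne: "Hs \<noteq> []" and fin: "finite V" and Vne: "V \<noteq> {}"
  shows "finite (path_embeddings r Hs V E x y) \<and>
    real (card (path_embeddings r Hs V E x y)) * real (card V) \<le> real (card V) ^ (length Hs * r)"
proof -
  have c2: "card {st Hs, en Hs} = 2" using st_en[OF ne rooted] by simp
  have "finite (path_embeddings r Hs V E x y) \<and>
    real (card (path_embeddings r Hs V E x y)) * real (card V) ^ (card {st Hs, en Hs} - 1) \<le> real (card V) ^ (length Hs * r)"
    by (rule core_real[OF rooted ne fin Vne order.refl])
       (use st_in[OF ne rooted] en_in[OF ne rooted] c2 ev_st ev_en in auto)
  then show ?thesis using c2 by simp
qed

lemma bound_pt:
  assumes rooted: "\<forall>H\<in>set Hs. rooted_graph r H" and ne: "Hs \<noteq> []" and fin: "finite V" and Vne: "V \<noteq> {}"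
    and j: "j < length Hs" and v: "v \<le> r" and wx: "w \<noteq> x" and wy: "w \<noteq> y"
  shows "finite {g\<in>path_embeddings r Hs V E x y. g j v = w} \<and>
    real (card {g\<in>path_embeddings r Hs V E x y. g j v = w}) * real (card V) ^ 2 \<le> real (card V) ^ (length Hs * r)"
proof (cases "canon Hs (j,v) = st Hs \<or> canon Hs (j,v) = en Hs")
  case True
  have "{g\<in>path_embeddings r Hs V E x y. g j v = w} = {}"
  proof (rule ccontr)
    assume "{g\<in>path_embeddings r Hs V E x y. g j v = w} \<noteq> {}"
    then obtain g where g: "g \<in> path_embeddings r Hs V E x y" "g j v = w" by auto
    have "ev g (canon Hs (j,v)) = w" using pe_canon[OF g(1) j] g(2) by simp
    then show False using True ev_st[OF g(1)] ev_en[OF g(1)] wx wy by auto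
  qed
  then show ?thesis by (simp only: card.empty finite.emptyI) simp
next
  case False
  let ?S = "{st Hs, en Hs, canon Hs (j,v)}"
  have c3: "card ?S = 3" using st_en[OF ne rooted] False by auto
  have "finite {g\<in>path_embeddings r Hs V E x y. g j v = w} \<and>
    real (card {g\<in>path_embeddings r Hs V E x y. g j v = w}) * real (card V) ^ (card ?S - 1) \<le> real (card V) ^ (length Hs * r)"
  proof (rule core_real[OF rooted ne fin Vne])
    show "?S \<subseteq> C0 r Hs" using st_in[OF ne rooted] en_in[OF ne rooted] canon_in[OF rooted j v] by auto
    show "\<forall>g1\<in>{g\<in>path_embeddings r Hs V E x y. g j v = w}. \<forall>g2\<in>{g\<in>path_embeddings r Hs V E x y. g j v = w}. \<forall>p\<in>?S. ev g1 p = ev g2 p"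
      using ev_st ev_en pe_canon[OF _ j] by auto
  qed (use c3 in auto)
  then show ?thesis using c3 by simp
qed

lemma inj_end:
  assumes f: "f \<in> path_embeddings r a V E x z" and rooted: "\<forall>H\<in>set a. rooted_graph r H" and ne: "a \<noteq> []"
    and i: "i < length a" and u: "u \<le> r" and eq: "f i u = z"
  shows "i = length a - 1 \<and> u = hw2 (a!(length a - 1))"
proof -
  let ?l = "length a - 1"
  have R: "hw2 (a!?l) \<le> r \<and> hw1 (a!?l) \<noteq> hw2 (a!?l)" using rootedD[of r "a!?l"] rooted ne by auto
  have "f i u = f ?l (hw2 (a!?l))" using eq pe_D(7)[OF f] by simp
  then have "(i = ?l \<and> u = hw2 (a!?l)) \<or> (?l = Suc i \<and> u = hw2 (a!i) \<and> hw2 (a!?l) = hw1 (a!?l)) \<or>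
         (i = Suc ?l \<and> hw2 (a!?l) = hw2 (a!?l) \<and> u = hw1 (a!i))"
    using pe_D(5)[OF f] i u R ne by (meson diff_less length_greater_0_conv zero_less_one)
  then show ?thesis using R i by auto
qed

lemma inj_start:
  assumes g: "g \<in> path_embeddings r b V E z y" and rooted: "\<forall>H\<in>set b. rooted_graph r H" and ne: "b \<noteq> []"
    and j: "j < length b" and v: "v \<le> r" and eq: "g j v = z"
  shows "j = 0 \<and> v = hw1 (b!0)"
proof -
  have R: "hw1 (b!0) \<le> r \<and> hw1 (b!0) \<noteq> hw2 (b!0)" using rootedD[of r "b!0"] rooted ne by auto
  have "g j v = g 0 (hw1 (b!0))" using eq pe_D(6)[OF g] by simp
  then have "(j = 0 \<and> v = hw1 (b!0)) \<or> (0 = Suc j \<and> v = hw2 (b!j) \<and> hw1 (b!0) = hw1 (b!0)) \<or>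
         (j = Suc 0 \<and> hw1 (b!0) = hw2 (b!0) \<and> v = hw1 (b!j))"
    using pe_D(5)[OF g] j v R ne by blast
  then show ?thesis using R by auto
qed

lemma pe_ends_distinct:
  assumes f: "f \<in> path_embeddings r a V E x z" and rooted: "\<forall>H\<in>set a. rooted_graph r H" and ne: "a \<noteq> []"
  shows "x \<noteq> z"
proof
  assume "x = z"
  have R: "hw1 (a!0) \<le> r \<and> hw1 (a!0) \<noteq> hw2 (a!0)" using rootedD[of r "a!0"] rooted ne by auto
  have "f 0 (hw1 (a!0)) = z" using pe_D(6)[OF f] \<open>x = z\<close> by simp
  from inj_end[OF f rooted ne _ _ this] R ne show False by auto
qed



definition cat :: "nat \<Rightarrow> (nat \<Rightarrow> nat \<Rightarrow> nat) \<Rightarrow> (nat \<Rightarrow> nat \<Rightarrow> nat) \<Rightarrow> nat \<Rightarrow> nat \<Rightarrow> nat" where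
  "cat l f g = (\<lambda>i v. if i < l then f i v else g (i - l) v)"

lemma cat_pe:
  assumes f: "f \<in> path_embeddings r a V E x z" and g: "g \<in> path_embeddings r b V E z y"
    and ra: "\<forall>H\<in>set a. rooted_graph r H" and rb: "\<forall>H\<in>set b. rooted_graph r H"
    and na: "a \<noteq> []" and nb: "b \<noteq> []"
    and D: "\<forall>i<length a. \<forall>u\<le>r. \<forall>j<length b. \<forall>v\<le>r. f i u = g j v \<longrightarrow> f i u = z"
  shows "cat (length a) f g \<in> path_embeddings r (a @ b) V E x y"
proof -
  let ?la = "length a" and ?lb = "length b" and ?h = "cat (length a) f g"
  note F = pe_D[OF f] and G = pe_D[OF g]
  have nth1: "(a@b)!i = a!i" if "i < ?la" for i using that by (simp add: nth_append)
  have nth2: "(a@b)!i = b!(i - ?la)" if "\<not> i < ?la" for i using that by (simp add: nth_append)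
  have h1: "?h i v = f i v" if "i < ?la" for i v using that by (simp add: cat_def)
  have h2: "?h i v = g (i - ?la) v" if "\<not> i < ?la" for i v using that by (simp add: cat_def)
  have P1: "\<forall>i v. (length (a@b) \<le> i \<or> r < v) \<longrightarrow> ?h i v = 0"
  proof (intro allI impI)
    fix i v assume "length (a@b) \<le> i \<or> r < v"
    then show "?h i v = 0" using F(1) G(1) h1 h2 by (cases "i < ?la") auto
  qed
  have P2: "\<forall>i<length (a@b). \<forall>v\<le>r. ?h i v \<in> V"
  proof (intro allI impI)
    fix i v assume "i < length (a@b)" "v \<le> r"
    then show "?h i v \<in> V" using F(2) G(2) h1 h2 by (cases "i < ?la") auto
  qed
  have P3: "\<forall>i<length (a@b). \<forall>u\<le>r. \<forall>v\<le>r. hE ((a@b)!i) u v \<longrightarrow> E (?h i u) (?h i v)"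
  proof (intro allI impI)
    fix i u v assume "i < length (a@b)" "u \<le> r" "v \<le> r" "hE ((a@b)!i) u v"
    then show "E (?h i u) (?h i v)" using F(3) G(3) h1 h2 nth1 nth2 by (cases "i < ?la") auto
  qed
  have P4: "\<forall>i. Suc i < length (a@b) \<longrightarrow> ?h i (hw2 ((a@b)!i)) = ?h (Suc i) (hw1 ((a@b)!Suc i))"
  proof (intro allI impI)
    fix i assume i: "Suc i < length (a@b)"
    consider "Suc i < ?la" | "Suc i = ?la" | "?la \<le> i" by linarith
    then show "?h i (hw2 ((a@b)!i)) = ?h (Suc i) (hw1 ((a@b)!Suc i))"
    proof cases
      case 1 then show ?thesis using F(4) h1 nth1 by simp
    next
      case 2
      then have "i = ?la - 1" by simp
      then show ?thesis using 2 F(7) G(6) h1 h2 nth1 nth2 by simp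
    next
      case 3
      then have "Suc (i - ?la) < ?lb" "Suc i - ?la = Suc (i - ?la)" using i by auto
      then show ?thesis using 3 G(4) h2 nth2 by simp
    qed
  qed
  have P5: "\<forall>i<length (a@b). \<forall>j<length (a@b). \<forall>u\<le>r. \<forall>v\<le>r. ?h i u = ?h j v \<longrightarrow>
         (i = j \<and> u = v) \<or>
         (j = Suc i \<and> u = hw2 ((a@b)!i) \<and> v = hw1 ((a@b)!j)) \<or>
         (i = Suc j \<and> v = hw2 ((a@b)!j) \<and> u = hw1 ((a@b)!i))"
  proof (intro allI impI)
    fix i j u v assume i: "i < length (a@b)" and j: "j < length (a@b)" and u: "u \<le> r" and v: "v \<le> r"
      and eq: "?h i u = ?h j v"
    have cross: "j = Suc i \<and> u = hw2 ((a@b)!i) \<and> v = hw1 ((a@b)!j)"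
      if i': "i < ?la" and j': "\<not> j < ?la" and jj: "j < length (a@b)" and u': "u \<le> r" and v': "v \<le> r"
        and e: "f i u = g (j - ?la) v" for i j u v
    proof -
      have jl: "j - ?la < ?lb" using j' jj by auto
      have fz: "f i u = z" using D i' u' jl v' e by blast
      have A1: "i = ?la - 1 \<and> u = hw2 (a!(?la - 1))" by (rule inj_end[OF f ra na i' u' fz])
      have A2: "j - ?la = 0 \<and> v = hw1 (b!0)" by (rule inj_start[OF g rb nb jl v']) (use e fz in simp)
      have "j = Suc i" using A1 A2 j' na by auto
      then show ?thesis using A1 A2 nth1[OF i'] nth2[OF j'] by simp
    qed
    show "(i = j \<and> u = v) \<or>
         (j = Suc i \<and> u = hw2 ((a@b)!i) \<and> v = hw1 ((a@b)!j)) \<or>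
         (i = Suc j \<and> v = hw2 ((a@b)!j) \<and> u = hw1 ((a@b)!i))"
    proof (cases "i < ?la")
      case ci: True
      show ?thesis
      proof (cases "j < ?la")
        case True
        then show ?thesis using F(5) ci u v eq h1 nth1 by auto
      next
        case False
        then show ?thesis using cross[OF ci False j u v] eq h1[OF ci] h2[OF False] by simp
      qed
    next
      case ci: False
      show ?thesis
      proof (cases "j < ?la")
        case True
        then show ?thesis using cross[OF True ci i v u] eq h1[OF True] h2[OF ci] by simp
      next
        case False
        have il: "i - ?la < ?lb" and jl: "j - ?la < ?lb" using i j ci False by auto
        have "g (i - ?la) u = g (j - ?la) v" using eq h2 ci False by simp
        then have "(i - ?la = j - ?la \<and> u = v) \<or>
          (j - ?la = Suc (i - ?la) \<and> u = hw2 (b!(i - ?la)) \<and> v = hw1 (b!(j - ?la))) \<or>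
          (i - ?la = Suc (j - ?la) \<and> v = hw2 (b!(j - ?la)) \<and> u = hw1 (b!(i - ?la)))"
          using G(5) il jl u v by blast
        then show ?thesis using nth2[OF ci] nth2[OF False] ci False by auto
      qed
    qed
  qed
  have P6: "?h 0 (hw1 ((a@b)!0)) = x" using F(6) na h1 nth1 by simp
  have P7: "?h (length (a@b) - 1) (hw2 ((a@b)!(length (a@b) - 1))) = y"
  proof -
    have "\<not> length (a@b) - 1 < ?la" "length (a@b) - 1 - ?la = ?lb - 1" using nb by (cases b; simp)+
    then show ?thesis using G(7) h2 nth2 by simp
  qed
  show ?thesis unfolding path_embeddings_def using P1 P2 P3 P4 P5 P6 P7 by blast
qed



definition good :: "nat \<Rightarrow> rgraph list \<Rightarrow> rgraph list \<Rightarrow> nat set \<Rightarrow> (nat \<Rightarrow> nat \<Rightarrow> bool) \<Rightarrow> nat \<Rightarrow> nat \<Rightarrow> nat \<Rightarrow>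
   ((nat \<Rightarrow> nat \<Rightarrow> nat) \<times> (nat \<Rightarrow> nat \<Rightarrow> nat)) set" where
  "good r a b V E x y z = {p \<in> path_embeddings r a V E x z \<times> path_embeddings r b V E z y.
     \<forall>i<length a. \<forall>u\<le>r. \<forall>j<length b. \<forall>v\<le>r. fst p i u = snd p j v \<longrightarrow> fst p i u = z}"

lemma bad_one:
  assumes ra: "\<forall>H\<in>set a. rooted_graph r H" and rb: "\<forall>H\<in>set b. rooted_graph r H"
    and na: "a \<noteq> []" and nb: "b \<noteq> []" and fin: "finite V" and Vne: "V \<noteq> {}"
    and xy: "x \<noteq> y" and xz: "x \<noteq> z" and zy: "z \<noteq> y"
    and i: "i < length a" and u: "u \<le> r" and j: "j < length b" and v: "v \<le> r"
  shows "finite {p \<in> path_embeddings r a V E x z \<times> path_embeddings r b V E z y. fst p i u = snd p j v \<and> fst p i u \<noteq> z} \<and>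
    real (card {p \<in> path_embeddings r a V E x z \<times> path_embeddings r b V E z y. fst p i u = snd p j v \<and> fst p i u \<noteq> z})
      * real (card V) ^ 3 \<le> 2 * (real (card V) ^ (length a * r) * real (card V) ^ (length b * r))"
proof -
  let ?A = "path_embeddings r a V E x z" and ?B = "path_embeddings r b V E z y" and ?n = "real (card V)"
  let ?N = "?n ^ (length a * r)" and ?M = "?n ^ (length b * r)"
  define A1 where "A1 = {f \<in> ?A. f i u \<noteq> z \<and> f i u \<noteq> y}"
  define S1 where "S1 = Sigma A1 (\<lambda>f. {g \<in> ?B. g j v = f i u})"
  define S2 where "S2 = {f \<in> ?A. f i u = y} \<times> ?B"
  have n1: "?n \<ge> 1" using fin Vne by (simp add: Suc_leI card_gt_0_iff)
  note bA = bound_all[OF ra na fin Vne, of E x z] and bB = bound_all[OF rb nb fin Vne, of E z y]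
  have fA1: "finite A1" using bA A1_def by auto
  have bg: "finite {g \<in> ?B. g j v = f i u} \<and> real (card {g \<in> ?B. g j v = f i u}) * ?n ^ 2 \<le> ?M"
    if "f \<in> A1" for f
    using bound_pt[OF rb nb fin Vne j v] that A1_def by auto
  have fS1: "finite S1" using fA1 bg S1_def by auto
  have "card S1 = (\<Sum>f\<in>A1. card {g \<in> ?B. g j v = f i u})"
    unfolding S1_def using fA1 bg by (simp add: card_SigmaI)
  then have "real (card S1) * ?n ^ 2 = (\<Sum>f\<in>A1. real (card {g \<in> ?B. g j v = f i u}) * ?n ^ 2)"
    by (simp add: sum_distrib_right)
  also have "\<dots> \<le> (\<Sum>f\<in>A1. ?M)" by (rule sum_mono) (use bg in auto)
  also have "\<dots> = real (card A1) * ?M" by simp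
  also have "\<dots> \<le> real (card ?A) * ?M"
    using bA A1_def by (intro mult_right_mono) (auto intro: card_mono)
  finally have s1: "real (card S1) * ?n ^ 2 \<le> real (card ?A) * ?M" .
  have "real (card S1) * ?n ^ 3 = (real (card S1) * ?n ^ 2) * ?n" by (simp add: power_numeral_reduce)
  also have "\<dots> \<le> (real (card ?A) * ?M) * ?n" using s1 n1 by (intro mult_right_mono) auto
  also have "\<dots> = (real (card ?A) * ?n) * ?M" by simp
  also have "\<dots> \<le> ?N * ?M" using bA n1 by (intro mult_right_mono) auto
  finally have S1b: "real (card S1) * ?n ^ 3 \<le> ?N * ?M" .
  have pa: "finite {f \<in> ?A. f i u = y} \<and> real (card {f \<in> ?A. f i u = y}) * ?n ^ 2 \<le> ?N"
    using bound_pt[OF ra na fin Vne i u] xy zy by auto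
  have fS2: "finite S2" using pa bB S2_def by auto
  have "real (card S2) * ?n ^ 3 = (real (card {f \<in> ?A. f i u = y}) * ?n ^ 2) * (real (card ?B) * ?n)"
    unfolding S2_def by (simp add: card_cartesian_product power_numeral_reduce)
  also have "\<dots> \<le> ?N * ?M" using pa bB by (intro mult_mono) auto
  finally have S2b: "real (card S2) * ?n ^ 3 \<le> ?N * ?M" .
  have sub: "{p \<in> ?A \<times> ?B. fst p i u = snd p j v \<and> fst p i u \<noteq> z} \<subseteq> S1 \<union> S2"
    unfolding S1_def S2_def A1_def by auto
  have fin3: "finite (S1 \<union> S2)" using fS1 fS2 by auto
  have "card {p \<in> ?A \<times> ?B. fst p i u = snd p j v \<and> fst p i u \<noteq> z} \<le> card S1 + card S2"
    using card_mono[OF fin3 sub] card_Un_le[of S1 S2] by linarith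
  then have "real (card {p \<in> ?A \<times> ?B. fst p i u = snd p j v \<and> fst p i u \<noteq> z}) * ?n ^ 3
     \<le> real (card S1) * ?n ^ 3 + real (card S2) * ?n ^ 3"
    by (simp flip: distrib_right of_nat_add) (use n1 in auto)
  also have "\<dots> \<le> 2 * (?N * ?M)" using S1b S2b by simp
  finally show ?thesis using finite_subset[OF sub fin3] by simp
qed

lemma pow_pred: "m \<ge> 1 \<Longrightarrow> (x::real) ^ (m - 1) * x = x ^ m"
  by (cases m) (auto simp: power_Suc2)

lemma good_bound:
  assumes ra: "\<forall>H\<in>set a. rooted_graph r H" and rb: "\<forall>H\<in>set b. rooted_graph r H"
    and na: "a \<noteq> []" and nb: "b \<noteq> []" and fin: "finite V" and Vne: "V \<noteq> {}"
    and xy: "x \<noteq> y" and xz: "x \<noteq> z" and zy: "z \<noteq> y"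
    and rA: "real (card (path_embeddings r a V E x z)) \<ge> c1 * real (card V) ^ (length a * r - 1)"
    and rB: "real (card (path_embeddings r b V E z y)) \<ge> c2 * real (card V) ^ (length b * r - 1)"
    and c1: "c1 > 0" and c2: "c2 > 0"
  shows "finite (good r a b V E x y z) \<and>
    real (card (good r a b V E x y z)) * real (card V) ^ 3 \<ge>
      c1 * c2 * (real (card V) ^ (length a * r) * real (card V) ^ (length b * r)) * real (card V)
      - 2 * real (length a * (r+1) * (length b * (r+1))) * (real (card V) ^ (length a * r) * real (card V) ^ (length b * r))"
proof -
  let ?A = "path_embeddings r a V E x z" and ?B = "path_embeddings r b V E z y" and ?n = "real (card V)"
  let ?N = "?n ^ (length a * r)" and ?M = "?n ^ (length b * r)"
  let ?G = "good r a b V E x y z"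
  define I where "I = {..<length a} \<times> {..r} \<times> {..<length b} \<times> {..r}"
  define Bad where "Bad q = {p \<in> ?A \<times> ?B. fst p (fst q) (fst (snd q)) = snd p (fst (snd (snd q))) (snd (snd (snd q)))
     \<and> fst p (fst q) (fst (snd q)) \<noteq> z}" for q
  have n1: "?n \<ge> 1" using fin Vne by (simp add: Suc_leI card_gt_0_iff)
  have r1: "r \<ge> 1" using rootedD[of r "a!0"] ra na by fastforce
  note bA = bound_all[OF ra na fin Vne, of E x z] and bB = bound_all[OF rb nb fin Vne, of E z y]
  have fAB: "finite (?A \<times> ?B)" using bA bB by auto
  have Gsub: "?G \<subseteq> ?A \<times> ?B" unfolding good_def by auto
  have fG: "finite ?G" using finite_subset[OF Gsub fAB] .
  have fI: "finite I" unfolding I_def by auto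
  have Dsub: "(?A \<times> ?B) - ?G \<subseteq> (\<Union>q\<in>I. Bad q)"
  proof
    fix p assume "p \<in> (?A \<times> ?B) - ?G"
    then obtain i u j v where "i < length a" "u \<le> r" "j < length b" "v \<le> r" "fst p i u = snd p j v" "fst p i u \<noteq> z"
      "p \<in> ?A \<times> ?B"
      unfolding good_def by blast
    then show "p \<in> (\<Union>q\<in>I. Bad q)" unfolding I_def Bad_def
      by (intro UN_I[of "(i,u,j,v)"]) auto
  qed
  have bq: "finite (Bad q) \<and> real (card (Bad q)) * ?n ^ 3 \<le> 2 * (?N * ?M)" if "q \<in> I" for q
  proof -
    obtain i u j v where q: "q = (i,u,j,v)" by (cases q) auto
    show ?thesis unfolding Bad_def q using that q I_def
      by (simp add: bad_one[OF ra rb na nb fin Vne xy xz zy])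
  qed
  have "card ((?A \<times> ?B) - ?G) \<le> card (\<Union>q\<in>I. Bad q)"
    using bq fI by (intro card_mono[OF _ Dsub]) auto
  also have "\<dots> \<le> (\<Sum>q\<in>I. card (Bad q))" by (rule card_UN_le[OF fI])
  finally have "real (card ((?A \<times> ?B) - ?G)) * ?n ^ 3 \<le> (\<Sum>q\<in>I. real (card (Bad q))) * ?n ^ 3"
    using n1 by (intro mult_right_mono) (auto simp flip: of_nat_sum)
  also have "\<dots> = (\<Sum>q\<in>I. real (card (Bad q)) * ?n ^ 3)" by (simp add: sum_distrib_right)
  also have "\<dots> \<le> (\<Sum>q\<in>I. 2 * (?N * ?M))" by (rule sum_mono) (use bq in auto)
  also have "\<dots> = real (card I) * (2 * (?N * ?M))" by simp
  also have "card I = length a * (r+1) * (length b * (r+1))" unfolding I_def by (simp add: card_cartesian_product algebra_simps)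
  finally have badb: "real (card ((?A \<times> ?B) - ?G)) * ?n ^ 3 \<le> 2 * real (length a * (r+1) * (length b * (r+1))) * (?N * ?M)"
    by simp
  have cG: "real (card ?G) = real (card ?A) * real (card ?B) - real (card ((?A \<times> ?B) - ?G))"
    using card_Diff_subset[OF fG Gsub] card_mono[OF fAB Gsub] by (simp add: card_cartesian_product of_nat_diff)
  have la1: "length a * r \<ge> 1" and lb1: "length b * r \<ge> 1" using na nb r1 by (cases a; cases b; auto)+
  have "real (card ?A) * ?n \<ge> c1 * ?n ^ (length a * r - 1) * ?n" using rA n1 by (intro mult_right_mono) auto
  also have "c1 * ?n ^ (length a * r - 1) * ?n = c1 * ?N" using pow_pred[OF la1]
    by (simp add: mult.assoc)
  finally have aN: "real (card ?A) * ?n \<ge> c1 * ?N" .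
  have "real (card ?B) * ?n \<ge> c2 * ?n ^ (length b * r - 1) * ?n" using rB n1 by (intro mult_right_mono) auto
  also have "c2 * ?n ^ (length b * r - 1) * ?n = c2 * ?M" using pow_pred[OF lb1]
    by (simp add: mult.assoc)
  finally have bM: "real (card ?B) * ?n \<ge> c2 * ?M" .
  have "(real (card ?A) * ?n) * (real (card ?B) * ?n) \<ge> (c1 * ?N) * (c2 * ?M)"
    by (rule mult_mono[OF aN bM]) (use c1 c2 in auto)
  then have ab: "real (card ?A) * real (card ?B) * ?n ^ 2 \<ge> c1 * c2 * (?N * ?M)"
    by (simp add: power2_eq_square mult_ac)
  have "real (card ?G) * ?n ^ 3 = real (card ?A) * real (card ?B) * ?n ^ 2 * ?n - real (card ((?A \<times> ?B) - ?G)) * ?n ^ 3"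
    unfolding cG by (simp add: algebra_simps power_numeral_reduce)
  also have "\<dots> \<ge> c1 * c2 * (?N * ?M) * ?n - 2 * real (length a * (r+1) * (length b * (r+1))) * (?N * ?M)"
    using ab badb n1 by (smt (verit) mult_right_mono)
  finally show ?thesis using fG by simp
qed



lemma cat_inj:
  assumes "\<forall>p\<in>T. fst p \<in> path_embeddings r a V E x (z p) \<and> snd p \<in> path_embeddings r b V E (z p) y"
  shows "inj_on (\<lambda>p. cat (length a) (fst p) (snd p)) T"
proof
  fix p q assume p: "p \<in> T" and q: "q \<in> T" and eq: "cat (length a) (fst p) (snd p) = cat (length a) (fst q) (snd q)"
  have z1: "fst p i v = 0" "fst q i v = 0" if "\<not> i < length a" for i v
    using pe_D(1)[of "fst p"] pe_D(1)[of "fst q"] assms p q that by (meson not_le)+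
  have "fst p = fst q"
  proof (intro ext)
    fix i v show "fst p i v = fst q i v"
    proof (cases "i < length a")
      case True then show ?thesis using fun_cong[OF fun_cong[OF eq, of i], of v] by (simp add: cat_def)
    qed (use z1 in auto)
  qed
  moreover have "snd p = snd q"
  proof (intro ext)
    fix j v show "snd p j v = snd q j v"
      using fun_cong[OF fun_cong[OF eq, of "j + length a"], of v] by (simp add: cat_def)
  qed
  ultimately show "p = q" by (simp add: prod_eq_iff)
qed

lemma pigeon:
  assumes fU: "finite U" and fI: "finite I" and Ine: "I \<noteq> {}" and c: "\<forall>z\<in>U. cl z \<in> I"
  shows "\<exists>q\<in>I. real (card {z\<in>U. cl z = q}) * real (card I) \<ge> real (card U)"
proof (rule ccontr)
  assume "\<not> ?thesis"
  then have lt: "real (card {z\<in>U. cl z = q}) < real (card U) / real (card I)" if "q \<in> I" for q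
    using that Ine fI by (auto simp: card_gt_0_iff field_simps)
  have "U = (\<Union>q\<in>I. {z\<in>U. cl z = q})" using c by auto
  then have "card U \<le> (\<Sum>q\<in>I. card {z\<in>U. cl z = q})" using card_UN_le[OF fI] by metis
  then have "real (card U) \<le> (\<Sum>q\<in>I. real (card {z\<in>U. cl z = q}))" by (simp flip: of_nat_sum)
  also have "\<dots> < (\<Sum>q\<in>I. real (card U) / real (card I))" using lt fI Ine by (intro sum_strict_mono) auto
  also have "\<dots> = real (card U)" using fI Ine by simp
  finally show False by simp
qed

lemma good_z:
  assumes "p \<in> good r a b V E x y z"
  shows "ev (fst p) (en a) = z" "fst p \<in> path_embeddings r a V E x z" "snd p \<in> path_embeddings r b V E z y"
proof -
  have m: "fst p \<in> path_embeddings r a V E x z \<and> snd p \<in> path_embeddings r b V E z y"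
    using assms unfolding good_def by (auto simp: mem_Times_iff)
  then show "fst p \<in> path_embeddings r a V E x z" "snd p \<in> path_embeddings r b V E z y" by auto
  show "ev (fst p) (en a) = z" using m ev_en by blast
qed



theorem lemma6p10:
  fixes r :: nat and Hx Hy :: "rgraph list set" and \<beta>x \<beta>y \<epsilon> :: real
  assumes "finite Hx" and "finite Hy"
    and "\<forall>Hs\<in>Hx \<union> Hy. Hs \<noteq> [] \<and> (\<forall>H\<in>set Hs. rooted_graph r H)"
    and "\<beta>x > 0" and "\<beta>y > 0" and "\<epsilon> > 0"
  shows "\<exists>n0::nat. \<forall>V E (n::nat) x y U.
           sgraph V E \<longrightarrow> card V = n \<longrightarrow> n \<ge> n0 \<longrightarrow>
           x \<in> V \<longrightarrow> y \<in> V \<longrightarrow> x \<noteq> y \<longrightarrow> U \<subseteq> V \<longrightarrow> real (card U) \<ge> \<epsilon> * real n \<longrightarrow>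
           (\<forall>z\<in>U. reachable_set r Hx \<beta>x V E x z \<and> reachable_set r Hy \<beta>y V E z y) \<longrightarrow>
           reachable_set r (vec_plus Hx Hy)
             (\<epsilon> * \<beta>x * \<beta>y / (2 * real (card Hx) * real (card Hy))) V E x y"
proof -
  note fHx = assms(1) and fHy = assms(2) and HH = assms(3) and bx = assms(4) and by0 = assms(5) and eps = assms(6)
  define L where "L = (\<Sum>Hs\<in>Hx \<union> Hy. length Hs)"
  define K where "K = real (L * (r+1) * (L * (r+1)))"
  define n0 where "n0 = nat \<lceil>4 * K / (\<beta>x * \<beta>y)\<rceil> + 1"
  have Lle: "length Hs \<le> L" if "Hs \<in> Hx \<union> Hy" for Hs
    unfolding L_def using fHx fHy that by (intro member_le_sum) auto
  show ?thesis
  proof (intro exI[of _ n0] allI impI)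
    fix V E n x y U
    assume sg: "sgraph V E" and cV: "card V = n" and nn0: "n \<ge> n0" and xV: "x \<in> V" and yV: "y \<in> V"
      and xy: "x \<noteq> y" and UV: "U \<subseteq> V" and cU: "real (card U) \<ge> \<epsilon> * real n"
      and R: "\<forall>z\<in>U. reachable_set r Hx \<beta>x V E x z \<and> reachable_set r Hy \<beta>y V E z y"
    let ?n = "real (card V)"
    have finV: "finite V" using sg by (simp add: sgraph_def)
    have Vne: "V \<noteq> {}" using xV by auto
    have n1: "?n \<ge> 1" using finV Vne by (simp add: Suc_leI card_gt_0_iff)
    have nK: "?n \<ge> 4 * K / (\<beta>x * \<beta>y)"
    proof -
      have "4 * K / (\<beta>x * \<beta>y) \<le> real (nat \<lceil>4 * K / (\<beta>x * \<beta>y)\<rceil>)" by linarith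
      also have "\<dots> \<le> real n0" unfolding n0_def by simp
      also have "\<dots> \<le> ?n" using nn0 cV by simp
      finally show ?thesis .
    qed
    have fU: "finite U" using finite_subset[OF UV finV] .
    have "\<epsilon> * ?n > 0" using eps n1 by simp
    then have Une: "U \<noteq> {}" using cU cV by auto
    obtain pa where pa: "\<forall>z\<in>U. pa z \<in> Hx \<and> reachable r (pa z) \<beta>x V E x z"
      using R unfolding reachable_set_def by metis
    obtain pb where pb: "\<forall>z\<in>U. pb z \<in> Hy \<and> reachable r (pb z) \<beta>y V E z y"
      using R unfolding reachable_set_def by metis
    have Ine: "Hx \<times> Hy \<noteq> {}" using Une pa pb by blast
    obtain q where q: "q \<in> Hx \<times> Hy"
      and cq: "real (card {z\<in>U. (pa z, pb z) = q}) * real (card (Hx \<times> Hy)) \<ge> real (card U)"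
      using pigeon[OF fU _ Ine, of "\<lambda>z. (pa z, pb z)"] fHx fHy pa pb by auto
    obtain a b where q_ab: "q = (a, b)" by (cases q)
    define U' where "U' = {z\<in>U. (pa z, pb z) = q}"
    have a: "a \<in> Hx" and b: "b \<in> Hy" using q q_ab by auto
    have na: "a \<noteq> []" and ra: "\<forall>H\<in>set a. rooted_graph r H" using HH a by auto
    have nb: "b \<noteq> []" and rb: "\<forall>H\<in>set b. rooted_graph r H" using HH b by auto
    have reachU: "reachable r a \<beta>x V E x z \<and> reachable r b \<beta>y V E z y" if "z \<in> U'" for z
      using that pa pb q_ab unfolding U'_def by auto
    define N where "N = ?n ^ (length a * r)"
    define M where "M = ?n ^ (length b * r)"
    have NM0: "N * M \<ge> 0" unfolding N_def M_def by simp
    have Kab: "real (length a * (r+1) * (length b * (r+1))) \<le> K"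
      unfolding K_def using Lle[of a] Lle[of b] a b by (intro of_nat_mono mult_mono) auto
    have gz: "finite (good r a b V E x y z) \<and> real (card (good r a b V E x y z)) * ?n ^ 2 \<ge> \<beta>x * \<beta>y / 2 * (N * M)"
      if z: "z \<in> U'" for z
    proof -
      have rA: "real (card (path_embeddings r a V E x z)) \<ge> \<beta>x * ?n ^ (length a * r - 1)"
        and rB: "real (card (path_embeddings r b V E z y)) \<ge> \<beta>y * ?n ^ (length b * r - 1)"
        using reachU[OF z] unfolding reachable_def by auto
      have "\<beta>x * ?n ^ (length a * r - 1) > 0" using bx n1 by simp
      then have "path_embeddings r a V E x z \<noteq> {}" using rA by auto
      then have xz: "x \<noteq> z" using pe_ends_distinct[OF _ ra na] by blast
      have "\<beta>y * ?n ^ (length b * r - 1) > 0" using by0 n1 by simp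
      then have "path_embeddings r b V E z y \<noteq> {}" using rB by auto
      then have zy: "z \<noteq> y" using pe_ends_distinct[OF _ rb nb] by blast
      note G = good_bound[OF ra rb na nb finV Vne xy xz zy rA rB bx by0]
      have "2 * real (length a * (r+1) * (length b * (r+1))) * (N * M) \<le> 2 * K * (N * M)"
        using Kab NM0 by (intro mult_right_mono) auto
      also have "\<dots> \<le> \<beta>x * \<beta>y * (N * M) * ?n / 2"
      proof -
        have "4 * K \<le> ?n * (\<beta>x * \<beta>y)" using nK bx by0 by (simp add: field_simps)
        then have "4 * K * (N * M) \<le> ?n * (\<beta>x * \<beta>y) * (N * M)" using NM0 by (intro mult_right_mono)
        then show ?thesis by (simp add: field_simps)
      qed
      finally have "real (card (good r a b V E x y z)) * ?n ^ 3 \<ge> \<beta>x * \<beta>y / 2 * (N * M) * ?n"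
        using G unfolding N_def M_def by (simp add: field_simps)
      then have "real (card (good r a b V E x y z)) * ?n ^ 2 * ?n \<ge> \<beta>x * \<beta>y / 2 * (N * M) * ?n"
        by (simp add: power_numeral_reduce mult_ac)
      then show ?thesis using G n1 by (simp add: mult_le_cancel_right)
    qed
    define T where "T = (\<Union>z\<in>U'. good r a b V E x y z)"
    have fU': "finite U'" using fU U'_def by auto
    have disj: "good r a b V E x y z1 \<inter> good r a b V E x y z2 = {}" if "z1 \<noteq> z2" for z1 z2
      using that good_z(1) by blast
    have cT: "card T = (\<Sum>z\<in>U'. card (good r a b V E x y z))"
      unfolding T_def using fU' gz disj by (intro card_UN_disjoint) blast+
    have Tmem: "\<forall>p\<in>T. fst p \<in> path_embeddings r a V E x (ev (fst p) (en a)) \<and> snd p \<in> path_embeddings r b V E (ev (fst p) (en a)) y"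
      proof
      fix p assume "p \<in> T"
      then obtain z where "p \<in> good r a b V E x y z" unfolding T_def by blast
      then show "fst p \<in> path_embeddings r a V E x (ev (fst p) (en a)) \<and> snd p \<in> path_embeddings r b V E (ev (fst p) (en a)) y"
        using good_z by metis
    qed
    have img: "(\<lambda>p. cat (length a) (fst p) (snd p)) ` T \<subseteq> path_embeddings r (a @ b) V E x y"
    proof
      fix h assume "h \<in> (\<lambda>p. cat (length a) (fst p) (snd p)) ` T"
      then obtain z p where z: "z \<in> U'" and p: "p \<in> good r a b V E x y z" and h: "h = cat (length a) (fst p) (snd p)"
        unfolding T_def by auto
      show "h \<in> path_embeddings r (a @ b) V E x y"
        unfolding h using p good_z(2,3)[OF p] unfolding good_def by (intro cat_pe[OF _ _ ra rb na nb]) auto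
    qed
    have rab: "\<forall>H\<in>set (a@b). rooted_graph r H" using ra rb by auto
    have fP: "finite (path_embeddings r (a @ b) V E x y)" using bound_all[OF rab _ finV Vne] na by auto
    have "card T \<le> card (path_embeddings r (a @ b) V E x y)"
      using card_inj_on_le[OF cat_inj[OF Tmem] img fP] .
    then have "real (card (path_embeddings r (a @ b) V E x y)) * ?n ^ 2 \<ge> real (card T) * ?n ^ 2"
      by (intro mult_right_mono) auto
    moreover have "real (card T) * ?n ^ 2 = (\<Sum>z\<in>U'. real (card (good r a b V E x y z)) * ?n ^ 2)"
      unfolding cT by (simp add: sum_distrib_right)
    moreover have "(\<Sum>z\<in>U'. real (card (good r a b V E x y z)) * ?n ^ 2) \<ge> (\<Sum>z\<in>U'. \<beta>x * \<beta>y / 2 * (N * M))"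
      using gz by (intro sum_mono) auto
    ultimately have c1: "real (card (path_embeddings r (a @ b) V E x y)) * ?n ^ 2 \<ge> real (card U') * (\<beta>x * \<beta>y / 2 * (N * M))"
      by simp
    have tpos: "real (card Hx) * real (card Hy) > 0" using Ine fHx fHy by (auto simp: card_gt_0_iff)
    have cU': "real (card U') * (real (card Hx) * real (card Hy)) \<ge> \<epsilon> * ?n"
      using cq cU cV unfolding U'_def by (simp add: card_cartesian_product)
    define \<beta> where "\<beta> = \<epsilon> * \<beta>x * \<beta>y / (2 * real (card Hx) * real (card Hy))"
    have "\<beta> * ?n * (N * M) \<le> real (card U') * (\<beta>x * \<beta>y / 2 * (N * M))"
    proof -
      have "\<beta> * ?n = (\<epsilon> * ?n) / (real (card Hx) * real (card Hy)) * (\<beta>x * \<beta>y / 2)"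
        unfolding \<beta>_def by (simp add: field_simps)
      also have "\<dots> \<le> real (card U') * (\<beta>x * \<beta>y / 2)"
        using cU' tpos bx by0 by (intro mult_right_mono) (auto simp: field_simps)
      finally show ?thesis using NM0 by (metis mult.assoc mult_right_mono)
    qed
    then have c2: "\<beta> * ?n * (N * M) \<le> real (card (path_embeddings r (a @ b) V E x y)) * ?n ^ 2"
      using c1 by linarith
    have r1: "r \<ge> 1" using rootedD[of r "a!0"] ra na by fastforce
    have le1: "length (a@b) * r \<ge> 1" using na r1 by (cases a) auto
    have "N * M = ?n ^ (length (a@b) * r)" unfolding N_def M_def by (simp add: algebra_simps power_add)
    also have "\<dots> = ?n ^ (length (a@b) * r - 1) * ?n" using pow_pred[OF le1] by simp
    finally have "\<beta> * ?n ^ (length (a@b) * r - 1) * ?n ^ 2 \<le> real (card (path_embeddings r (a @ b) V E x y)) * ?n ^ 2"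
      using c2 by (simp add: power2_eq_square mult_ac)
    then have "\<beta> * ?n ^ (length (a@b) * r - 1) \<le> real (card (path_embeddings r (a @ b) V E x y))"
      using n1 by (simp add: mult_le_cancel_right)
    then have "reachable r (a @ b) \<beta> V E x y" unfolding reachable_def by simp
    moreover have "a @ b \<in> vec_plus Hx Hy" using a b unfolding vec_plus_def by blast
    ultimately show "reachable_set r (vec_plus Hx Hy) (\<epsilon> * \<beta>x * \<beta>y / (2 * real (card Hx) * real (card Hy))) V E x y"
      unfolding reachable_set_def \<beta>_def by blast
  qed
qed

end
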